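(* Let $K$ be a compact Hausdorff space. A one-dimensional real Banach space can be U-embedded into $C(K)$ if and only if $K$ contains at least one $G_\delta$-point, i.e. a point $p$ such that $\{p\}$ is a $G_\delta$-subset of $K$.
   Context: $C(K)$ carries the sup norm. A linear isometry $T\colon X\to Y$ is a U-embedding if every $x^*\in X^*$ has a unique $y^*\in Y^*$ with $T^*(y^* )=x^*$ and $\|y^*\|=\|x^*\|$. *)

theory Defs
  imports "HOL-Analysis.Analysis"
begin

definition linear_isometry :: "('a::real_normed_vector \<Rightarrow> 'b::real_normed_vector) \<Rightarrow> bool" where
  "linear_isometry T \<longleftrightarrow> linear T \<and> (\<forall>x. norm (T x) = norm x)"

definition U_embedding :: "('a::real_normed_vector \<Rightarrow> 'b::real_normed_vector) \<Rightarrow> bool" where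
  "U_embedding T \<longleftrightarrow> linear_isometry T \<and>
     (\<forall>xs :: 'a \<Rightarrow>\<^sub>L real. \<exists>!ys :: 'b \<Rightarrow>\<^sub>L real.
        (\<forall>x. blinfun_apply ys (T x) = blinfun_apply xs x) \<and> norm ys = norm xs)"

end

theory Submission
  imports Defs
begin

declare scaleR_blinfun.rep_eq [simp]

definition delta :: "'k::topological_space \<Rightarrow> ('k \<Rightarrow>\<^sub>C real) \<Rightarrow>\<^sub>L real" where
  "delta p = Blinfun (\<lambda>g. apply_bcontfun g p)"

lemma bl_eval: "bounded_linear (\<lambda>g::('k::topological_space \<Rightarrow>\<^sub>C real). apply_bcontfun g p)"
proof (rule bounded_linear_intro[where K=1])
  fix g h :: "'k \<Rightarrow>\<^sub>C real" and r :: real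
  show "apply_bcontfun (g + h) p = apply_bcontfun g p + apply_bcontfun h p" by simp
  show "apply_bcontfun (r *\<^sub>R g) p = r *\<^sub>R apply_bcontfun g p" by simp
  show "norm (apply_bcontfun g p) \<le> norm g * 1" using norm_bounded[of g p] by simp
qed

lemma delta_apply [simp]: "blinfun_apply (delta p) g = apply_bcontfun g p"
  by (simp add: delta_def bounded_linear_Blinfun_apply[OF bl_eval])

lemma norm_delta [simp]: "norm (delta p) = 1"
proof (rule antisym)
  show "norm (delta p) \<le> 1"
  proof (rule norm_blinfun_bound)
    fix g :: "'a \<Rightarrow>\<^sub>C real"
    show "norm (blinfun_apply (delta p) g) \<le> 1 * norm g" using norm_bounded[of g p] by simp
  qed simp
  have "1 = norm (blinfun_apply (delta p) (const_bcontfun (1::real)))" by simp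
  also have "\<dots> \<le> norm (delta p) * norm (const_bcontfun (1::real) :: 'a \<Rightarrow>\<^sub>C real)"
    by (rule norm_blinfun)
  also have "\<dots> \<le> norm (delta p) * 1"
    by (rule mult_left_mono) (auto intro: norm_bound)
  finally show "1 \<le> norm (delta p)" by simp
qed


lemma normal_K:
  assumes "compact (UNIV :: 'k::t2_space set)"
  shows "normal_space (euclidean :: 'k topology)"
proof (rule compact_Hausdorff_or_regular_imp_normal_space)
  show "compact_space (euclidean :: 'k topology)"
    unfolding compact_space_def topspace_euclidean compactin_euclidean_iff by (rule assms)
  have "Hausdorff_space (euclidean :: 'k topology)"
    unfolding Hausdorff_space_def disjnt_def
  proof (intro allI impI)
    fix x y :: 'k
    assume "x \<in> topspace euclidean \<and> y \<in> topspace euclidean \<and> x \<noteq> y"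
    then have "x \<noteq> y" by simp
    from hausdorff[OF this] obtain U V where "open U" "open V" "x \<in> U" "y \<in> V" "U \<inter> V = {}"
      by blast
    then show "\<exists>U V. openin euclidean U \<and> openin euclidean V \<and> x \<in> U \<and> y \<in> V \<and> U \<inter> V = {}"
      using open_openin[of U] open_openin[of V] by blast
  qed
  then show "Hausdorff_space (euclidean :: 'k topology) \<or> regular_space (euclidean :: 'k topology)" ..
qed

lemma peak_unique:
  fixes f :: "'k::topological_space \<Rightarrow>\<^sub>C real" and \<phi> :: "('k \<Rightarrow>\<^sub>C real) \<Rightarrow>\<^sub>L real"
  assumes cpt: "compact (UNIV :: 'k set)"
    and fp: "apply_bcontfun f p = 1" and lt: "\<And>x. x \<noteq> p \<Longrightarrow> \<bar>apply_bcontfun f x\<bar> < 1"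
    and nphi: "norm \<phi> \<le> 1" and phif: "blinfun_apply \<phi> f = 1"
  shows "blinfun_apply \<phi> g = apply_bcontfun g p"
proof -
  have nf: "norm f \<le> 1"
    by (rule norm_bound) (metis fp lt order.refl less_imp_le real_norm_def abs_one)
  have zero: "blinfun_apply \<phi> h = 0" if hp: "apply_bcontfun h p = 0" for h
  proof -
    have "\<bar>blinfun_apply \<phi> h\<bar> \<le> e" if e: "e > 0" for e
    proof -
      define U where "U = {x. \<bar>apply_bcontfun h x\<bar> < e}"
      have "open U" unfolding U_def
        by (intro open_Collect_less continuous_intros) auto
      then have cK: "compact (- U)"
        using compact_Int_closed[OF cpt, of "-U"] by (simp add: closed_Compl)
      have pU: "p \<in> U" using hp e by (simp add: U_def)
      obtain d where d: "d > 0" "\<And>x. x \<in> - U \<Longrightarrow> \<bar>apply_bcontfun f x\<bar> \<le> 1 - d"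
      proof (cases "- U = {}")
        case True then show ?thesis using that[of 1] by auto
      next
        case False
        have "continuous_on (- U) (\<lambda>x. \<bar>apply_bcontfun f x\<bar>)"
          by (intro continuous_intros) auto
        then obtain x0 where x0: "x0 \<in> - U" "\<And>x. x \<in> - U \<Longrightarrow> \<bar>apply_bcontfun f x\<bar> \<le> \<bar>apply_bcontfun f x0\<bar>"
          using continuous_attains_sup[OF cK False] by blast
        have "x0 \<noteq> p" using x0 pU by auto
        then have "\<bar>apply_bcontfun f x0\<bar> < 1" by (rule lt)
        then show ?thesis
          using that[of "1 - \<bar>apply_bcontfun f x0\<bar>"] x0 by auto
      qed
      define t where "t = d / (norm h + 1)"
      have nh1: "norm h + 1 > 0" by (smt (verit) norm_ge_zero)
      have t: "t > 0" using d nh1 by (simp add: t_def)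
      have tn: "t * norm h \<le> d"
      proof -
        have "t * norm h \<le> t * (norm h + 1)" using t by simp
        also have "\<dots> = d" using nh1 by (simp add: t_def)
        finally show ?thesis .
      qed
      have bnd: "norm (f + s *\<^sub>R h) \<le> 1 + t * e" if s: "\<bar>s\<bar> = t" for s
      proof (rule norm_bound)
        fix x
        have hx: "\<bar>apply_bcontfun h x\<bar> \<le> norm h" using norm_bounded[of h x] by simp
        have fx: "\<bar>apply_bcontfun f x\<bar> \<le> 1" using norm_bounded[of f x] nf by simp
        have "\<bar>apply_bcontfun f x + s * apply_bcontfun h x\<bar> \<le> 1 + t * e"
        proof (cases "x \<in> U")
          case True
          then have "\<bar>apply_bcontfun h x\<bar> \<le> e" by (simp add: U_def)
          then have "\<bar>s * apply_bcontfun h x\<bar> \<le> t * e" using s t by (simp add: abs_mult mult_left_mono)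
          then show ?thesis using fx by linarith
        next
          case False
          then have "\<bar>apply_bcontfun f x\<bar> \<le> 1 - d" using d by auto
          moreover have "\<bar>s * apply_bcontfun h x\<bar> \<le> t * norm h" using s t hx by (simp add: abs_mult mult_left_mono)
          moreover have "t * e \<ge> 0" using t e by simp
          ultimately show ?thesis using tn by linarith
        qed
        then show "norm (apply_bcontfun (f + s *\<^sub>R h) x) \<le> 1 + t * e" by simp
      qed
      have key: "1 + s * blinfun_apply \<phi> h \<le> 1 + t * e" if s: "\<bar>s\<bar> = t" for s
      proof -
        have "1 + s * blinfun_apply \<phi> h = blinfun_apply \<phi> (f + s *\<^sub>R h)"
          by (simp add: phif blinfun.add_right blinfun.scaleR_right)
        also have "\<dots> \<le> norm (blinfun_apply \<phi> (f + s *\<^sub>R h))" by simp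
        also have "\<dots> \<le> norm \<phi> * norm (f + s *\<^sub>R h)" by (rule norm_blinfun)
        also have "\<dots> \<le> 1 * (1 + t * e)"
          by (rule mult_mono) (use nphi bnd[OF s] in auto)
        finally show ?thesis by simp
      qed
      have "t * blinfun_apply \<phi> h \<le> t * e" using key[of t] t by simp
      moreover have "t * (- blinfun_apply \<phi> h) \<le> t * e" using key[of "-t"] t by simp
      ultimately have "blinfun_apply \<phi> h \<le> e" "- blinfun_apply \<phi> h \<le> e"
        by (simp_all only: mult_le_cancel_left_pos[OF t])
      then show ?thesis by linarith
    qed
    then show ?thesis
      by (metis abs_le_zero_iff field_le_epsilon abs_ge_zero add_0 order_antisym)
  qed
  have "apply_bcontfun (g - apply_bcontfun g p *\<^sub>R f) p = 0" using fp by simp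
  from zero[OF this] show ?thesis
    by (simp add: blinfun.diff_right blinfun.scaleR_right phif)
qed

lemma urysohn_pt:
  fixes p :: "'k::t2_space"
  assumes "normal_space (euclidean :: 'k topology)" "closed S" "p \<notin> S"
  obtains h :: "'k \<Rightarrow> real" where "continuous_on UNIV h" "\<And>x. 0 \<le> h x \<and> h x \<le> 1"
    "h p = 1" "\<And>x. x \<in> S \<Longrightarrow> h x = 0"
proof -
  obtain h where h: "continuous_map euclidean (top_of_set {0..1::real}) h" "h ` S \<subseteq> {0}" "h ` {p} \<subseteq> {1}"
    using Urysohn_lemma[OF assms(1), of S "{p}" 0 1] assms by (auto simp: disjnt_def)
  then have "continuous_map euclidean euclidean h" "range h \<subseteq> {0..1}"
    by (auto simp: continuous_map_in_subtopology)
  moreover have "\<And>x. 0 \<le> h x \<and> h x \<le> 1" using \<open>range h \<subseteq> {0..1}\<close> by (meson atLeastAtMost_iff rangeI subsetD)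
  moreover have "\<And>x. x \<in> S \<Longrightarrow> h x = 0" using h(2) by auto
  moreover have "h p = 1" using h(3) by auto
  ultimately show ?thesis using that[of h]
    by (auto simp: continuous_map_iff_continuous[of UNIV, simplified])
qed

lemma peak_exists:
  fixes p :: "'k::t2_space"
  assumes "normal_space (euclidean :: 'k topology)" "gdelta_in euclidean {p}"
  obtains F :: "'k \<Rightarrow> real" where "continuous_on UNIV F" "F p = 1" "\<And>x. 0 \<le> F x"
    "\<And>x. x \<noteq> p \<Longrightarrow> F x < 1"
proof -
  have "(countable intersection_of openin euclidean) {p}" using assms(2) by (simp add: gdelta_in_alt)
  then obtain \<U> where U0: "countable \<U>" "\<U> \<subseteq> Collect (openin euclidean)" "\<Inter>\<U> = {p}"
    unfolding intersection_of_def by blast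
  have U: "countable \<U>" "\<And>U. U \<in> \<U> \<Longrightarrow> open U" "\<Inter>\<U> = {p}"
  proof -
    show "countable \<U>" by (rule U0(1))
    show "\<Inter>\<U> = {p}" by (rule U0(3))
    fix U assume "U \<in> \<U>"
    then have "openin euclidean U" using U0(2) by blast
    then show "open U" using open_openin[of U] by blast
  qed
  define \<V> where "\<V> = insert UNIV \<U>"
  have V: "countable \<V>" "\<V> \<noteq> {}" "\<And>U. U \<in> \<V> \<Longrightarrow> open U" "\<Inter>\<V> = {p}"
    using U by (auto simp: \<V>_def)
  define U where "U = from_nat_into \<V>"
  have rU: "range U = \<V>" using V by (simp add: U_def)
  have Uo: "open (U n)" "p \<in> U n" for n
    using rU V by (metis rangeI, metis rangeI Inter_iff singletonI)
  have "\<forall>n. \<exists>h :: 'k \<Rightarrow> real. continuous_on UNIV h \<and> (\<forall>x. 0 \<le> h x \<and> h x \<le> 1) \<and> h p = 1 \<and> (\<forall>x. x \<notin> U n \<longrightarrow> h x = 0)"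
  proof
    fix n
    obtain h :: "'k \<Rightarrow> real" where "continuous_on UNIV h" "\<And>x. 0 \<le> h x \<and> h x \<le> 1"
      "h p = 1" "\<And>x. x \<in> - U n \<Longrightarrow> h x = 0"
      using urysohn_pt[OF assms(1), of "- U n" p] Uo[of n] by (auto simp: closed_Compl)
    then show "\<exists>h :: 'k \<Rightarrow> real. continuous_on UNIV h \<and> (\<forall>x. 0 \<le> h x \<and> h x \<le> 1) \<and> h p = 1 \<and> (\<forall>x. x \<notin> U n \<longrightarrow> h x = 0)"
      by auto
  qed
  from choice[OF this] obtain h :: "nat \<Rightarrow> 'k \<Rightarrow> real" where hh: "\<forall>n. continuous_on UNIV (h n) \<and> (\<forall>x. 0 \<le> h n x \<and> h n x \<le> 1) \<and> h n p = 1 \<and> (\<forall>x. x \<notin> U n \<longrightarrow> h n x = 0)"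
    by blast
  have h: "\<And>n. continuous_on UNIV (h n)" "\<And>n x. 0 \<le> h n x" "\<And>n x. h n x \<le> 1"
    "\<And>n. h n p = 1" "\<And>n x. x \<notin> U n \<Longrightarrow> h n x = 0"
    using hh by blast+
  define g :: "nat \<Rightarrow> real" where "g n = (1/2)^Suc n" for n
  have gs: "g sums 1" unfolding g_def by (rule power_half_series)
  then have sg: "summable g" by (rule sums_summable)
  have g0: "g n > 0" for n by (simp add: g_def)
  define F where "F x = (\<Sum>n. g n * h n x)" for x
  have sgh: "summable (\<lambda>n. g n * h n x)" for x
    by (rule summable_comparison_test[OF _ sg]) (use h g0 in \<open>auto intro!: exI[of _ 0] simp: abs_mult less_imp_le\<close>)
  have "uniform_limit UNIV (\<lambda>n x. \<Sum>i<n. g i * h i x) F sequentially"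
    unfolding F_def
    by (rule Weierstrass_m_test[OF _ sg]) (use h g0 in \<open>auto simp: abs_mult less_imp_le\<close>)
  then have "continuous_on UNIV F"
    by (rule uniform_limit_theorem[rotated]) (auto intro!: always_eventually continuous_intros h)
  moreover have "F p = 1" using h(4) gs by (simp add: F_def sums_unique[symmetric])
  moreover have "0 \<le> F x" for x unfolding F_def
    by (rule suminf_nonneg[OF sgh]) (use h g0 in \<open>auto simp: less_imp_le\<close>)
  moreover have "F x < 1" if "x \<noteq> p" for x
  proof -
    obtain n where "x \<notin> U n" using V \<open>x \<noteq> p\<close> rU by blast
    then have hn: "h n x = 0" by (rule h(5))
    have "1 - F x = (\<Sum>n. g n - g n * h n x)"
      unfolding F_def using suminf_diff[OF sg sgh[of x]] sums_unique[OF gs] by simp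
    moreover have "0 < (\<Sum>n. g n - g n * h n x)"
    proof (subst suminf_pos_iff)
      show "summable (\<lambda>n. g n - g n * h n x)" using sg sgh by (rule summable_diff)
      show "0 \<le> g n - g n * h n x" for n using h(3)[of n x] g0[of n]
        by (simp add: mult_left_le)
      show "\<exists>i. 0 < g i - g i * h i x" using hn g0 by (intro exI[of _ n]) simp
    qed
    ultimately show ?thesis by simp
  qed
  ultimately show ?thesis using that by blast
qed

lemma mk_bcontfun:
  fixes h :: "'k::topological_space \<Rightarrow> real"
  assumes "continuous_on UNIV h" "\<And>x. \<bar>h x\<bar> \<le> B"
  shows "apply_bcontfun (Bcontfun h) = h"
  by (rule Bcontfun_inverse, rule bcontfun_normI[OF assms(1)]) (use assms(2) in simp)

lemma dim1:
  assumes "dim (UNIV :: 'b set) = 1"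
  obtains e :: "'b::real_normed_vector" and c where "norm e = 1" "linear c" "\<And>x. x = c x *\<^sub>R e"
proof -
  obtain B :: "'b set" where B: "independent B" "UNIV \<subseteq> span B" "card B = 1"
    using basis_exists[of "UNIV :: 'b set"] assms by auto
  then obtain e0 where e0: "B = {e0}" by (meson card_1_singletonE)
  then have "e0 \<noteq> 0" using B(1) by (auto simp: dependent_zero)
  define e where "e = e0 /\<^sub>R norm e0"
  have ne: "norm e = 1" using \<open>e0 \<noteq> 0\<close> by (simp add: e_def)
  then have enz: "e \<noteq> 0" by auto
  have "\<exists>k. x = k *\<^sub>R e" for x
  proof -
    have "x \<in> span {e0}" using B e0 by auto
    then obtain k where "x = k *\<^sub>R e0" by (auto simp: span_singleton)
    then have "x = (k * norm e0) *\<^sub>R e" using \<open>e0 \<noteq> 0\<close> by (simp add: e_def)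
    then show ?thesis by blast
  qed
  define c where "c x = (SOME k. x = k *\<^sub>R e)" for x
  have cx: "x = c x *\<^sub>R e" for x unfolding c_def by (rule someI_ex) fact
  have cu: "c x = k" if "x = k *\<^sub>R e" for x k
    using cx[of x] that enz by (metis scaleR_cancel_right)
  have "linear c"
  proof (rule linearI)
    show "c (b1 + b2) = c b1 + c b2" for b1 b2
      by (rule cu) (metis cx scaleR_add_left)
    show "c (r *\<^sub>R b) = r *\<^sub>R c b" for r b
      by (simp, rule cu) (metis cx scaleR_scaleR)
  qed
  then show ?thesis using that ne cx by blast
qed


theorem corollary6p29:
  assumes "compact (UNIV :: 'k::t2_space set)"
    and "dim (UNIV :: 'b::banach set) = 1"
  shows "(\<exists>T :: 'b \<Rightarrow> ('k \<Rightarrow>\<^sub>C real). U_embedding T) \<longleftrightarrow>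
         (\<exists>p :: 'k. gdelta_in euclidean {p})"
proof -
  obtain e :: 'b and c where ne: "norm e = 1" and lc: "linear c" and cx: "\<And>x. x = c x *\<^sub>R e"
    using dim1[OF assms(2)] by metis
  have enz: "e \<noteq> 0" using ne by auto
  have cu: "c (k *\<^sub>R e) = k" for k
    using cx[of "k *\<^sub>R e"] enz by (metis scaleR_cancel_right)
  have ce: "c e = 1" using cu[of 1] by simp
  have nx: "norm x = \<bar>c x\<bar>" for x
  proof -
    have "norm (c x *\<^sub>R e) = \<bar>c x\<bar>" using ne by simp
    then show ?thesis using cx[of x, symmetric] by simp
  qed
  have xsc: "blinfun_apply xs x = c x * blinfun_apply xs e" for xs :: "'b \<Rightarrow>\<^sub>L real" and x
  proof -
    have "blinfun_apply xs (c x *\<^sub>R e) = c x * blinfun_apply xs e"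
      by (simp add: blinfun.scaleR_right)
    then show ?thesis using cx[of x, symmetric] by simp
  qed
  have xsn: "norm xs = \<bar>blinfun_apply xs e\<bar>" for xs :: "'b \<Rightarrow>\<^sub>L real"
  proof (rule antisym)
    show "norm xs \<le> \<bar>blinfun_apply xs e\<bar>"
    proof (rule norm_blinfun_bound)
      fix x
      show "norm (blinfun_apply xs x) \<le> \<bar>blinfun_apply xs e\<bar> * norm x"
        using xsc[of xs x] nx[of x] by (simp add: abs_mult)
    qed simp
    show "\<bar>blinfun_apply xs e\<bar> \<le> norm xs"
      using norm_blinfun[of xs e] ne by simp
  qed
  show ?thesis
  proof
    assume "\<exists>T :: 'b \<Rightarrow> ('k \<Rightarrow>\<^sub>C real). U_embedding T"
    then obtain T :: "'b \<Rightarrow> ('k \<Rightarrow>\<^sub>C real)" where UT: "U_embedding T" by blast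
    have lT: "linear T" and iT: "\<And>x. norm (T x) = norm x"
      and ex: "\<And>xs :: 'b \<Rightarrow>\<^sub>L real. \<exists>!ys :: ('k \<Rightarrow>\<^sub>C real) \<Rightarrow>\<^sub>L real.
        (\<forall>x. blinfun_apply ys (T x) = blinfun_apply xs x) \<and> norm ys = norm xs"
      using UT unfolding U_embedding_def linear_isometry_def by blast+
    define f where "f = T e"
    have Tx: "T x = c x *\<^sub>R f" for x
    proof -
      have "T (c x *\<^sub>R e) = c x *\<^sub>R f" using linear_cmul[OF lT] f_def by simp
      then show ?thesis using cx[of x, symmetric] by simp
    qed
    have nf: "norm f = 1" using iT ne f_def by simp
    have bc: "bounded_linear c"
    proof (rule bounded_linear_intro[where K=1])
      show "c (x + y) = c x + c y" for x y by (rule linear_add[OF lc])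
      show "c (r *\<^sub>R x) = r *\<^sub>R c x" for r x by (rule linear_cmul[OF lc])
      show "norm (c x) \<le> norm x * 1" for x using nx[of x] by simp
    qed
    define xs where "xs = Blinfun c"
    have xsa: "blinfun_apply xs = c" by (simp add: xs_def bounded_linear_Blinfun_apply[OF bc])
    have nxs: "norm xs = 1" using xsn[of xs] xsa ce by simp
    have "continuous_on UNIV (\<lambda>x. \<bar>apply_bcontfun f x\<bar>)" by (intro continuous_intros) auto
    then obtain q where fq: "\<And>x. \<bar>apply_bcontfun f x\<bar> \<le> \<bar>apply_bcontfun f q\<bar>"
      using continuous_attains_sup[OF assms(1)] by blast
    have fq1: "\<bar>apply_bcontfun f q\<bar> = 1"
    proof (rule antisym)
      show "\<bar>apply_bcontfun f q\<bar> \<le> 1" using norm_bounded[of f q] nf by simp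
      have "norm f \<le> \<bar>apply_bcontfun f q\<bar>" by (rule norm_bound) (use fq in simp)
      then show "1 \<le> \<bar>apply_bcontfun f q\<bar>" using nf by simp
    qed
    have good: "(\<forall>x. blinfun_apply (apply_bcontfun f r *\<^sub>R delta r) (T x) = blinfun_apply xs x) \<and>
        norm (apply_bcontfun f r *\<^sub>R delta r) = norm xs" if r: "\<bar>apply_bcontfun f r\<bar> = 1" for r
    proof -
      have sq: "apply_bcontfun f r * apply_bcontfun f r = 1"
        using r abs_mult_self[of "apply_bcontfun f r"] by simp
      have "blinfun_apply (apply_bcontfun f r *\<^sub>R delta r) (T x) = blinfun_apply xs x" for x
      proof -
        have "blinfun_apply (apply_bcontfun f r *\<^sub>R delta r) (T x)
            = c x * (apply_bcontfun f r * apply_bcontfun f r)"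
          by (simp add: Tx blinfun.scaleR_right)
        also have "\<dots> = c x" using sq by simp
        finally show ?thesis using xsa by simp
      qed
      moreover have "norm (apply_bcontfun f r *\<^sub>R delta r) = norm xs" using r nxs by simp
      ultimately show ?thesis by blast
    qed
    have uq: "r = q" if r: "\<bar>apply_bcontfun f r\<bar> = 1" for r
    proof (rule ccontr)
      assume "r \<noteq> q"
      have eqd: "apply_bcontfun f r *\<^sub>R delta r = apply_bcontfun f q *\<^sub>R delta q"
        using ex[of xs] good[OF r] good[OF fq1] by blast
      obtain h :: "'k \<Rightarrow> real" where h: "continuous_on UNIV h" "\<And>x. 0 \<le> h x \<and> h x \<le> 1"
        "h q = 1" "\<And>x. x \<in> {r} \<Longrightarrow> h x = 0"
        using urysohn_pt[OF normal_K[OF assms(1)], of "{r}" q] \<open>r \<noteq> q\<close> by auto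
      have hb: "\<bar>h x\<bar> \<le> 1" for x using h(2)[of x] by simp
      have ga: "apply_bcontfun (Bcontfun h) = h" by (rule mk_bcontfun[OF h(1) hb])
      have "blinfun_apply (apply_bcontfun f r *\<^sub>R delta r) (Bcontfun h)
          = blinfun_apply (apply_bcontfun f q *\<^sub>R delta q) (Bcontfun h)" using eqd by simp
      then have "apply_bcontfun f r * h r = apply_bcontfun f q * h q" using ga by simp
      then have "apply_bcontfun f q = 0" using h(3) h(4)[of r] by simp
      then show False using fq1 by simp
    qed
    define S where "S n = {x. 1 - inverse (real (Suc n)) < \<bar>apply_bcontfun f x\<bar>}" for n
    have So: "open (S n)" for n
      unfolding S_def by (intro open_Collect_less continuous_intros) auto
    have Seq: "{q} = \<Inter>(range S)"
    proof
      show "{q} \<subseteq> \<Inter>(range S)" using fq1 by (auto simp: S_def)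
      show "\<Inter>(range S) \<subseteq> {q}"
      proof
        fix x assume x: "x \<in> \<Inter>(range S)"
        have "1 \<le> \<bar>apply_bcontfun f x\<bar>"
        proof (rule ccontr)
          assume "\<not> 1 \<le> \<bar>apply_bcontfun f x\<bar>"
          then have "0 < 1 - \<bar>apply_bcontfun f x\<bar>" by simp
          then obtain n where "inverse (of_nat (Suc n)) < 1 - \<bar>apply_bcontfun f x\<bar>"
            using reals_Archimedean by blast
          moreover have "x \<in> S n" using x by blast
          ultimately show False by (simp add: S_def)
        qed
        then have "\<bar>apply_bcontfun f x\<bar> = 1" using fq[of x] fq1 by simp
        then show "x \<in> {q}" using uq by simp
      qed
    qed
    have "gdelta_in euclidean (\<Inter>(range S))"
    proof (rule gdelta_in_Inter)
      show "countable (range S)" by simp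
      show "range S \<noteq> {}" by simp
      show "gdelta_in euclidean U" if "U \<in> range S" for U
      proof -
        from that obtain n where "U = S n" by blast
        then have "openin euclidean U" using So[of n] open_openin[of U] by blast
        then show ?thesis by (rule open_imp_gdelta_in)
      qed
    qed
    then show "\<exists>p :: 'k. gdelta_in euclidean {p}" using Seq by metis
  next
    assume "\<exists>p :: 'k. gdelta_in euclidean {p}"
    then obtain p :: 'k where gp: "gdelta_in euclidean {p}" by blast
    obtain F :: "'k \<Rightarrow> real" where F: "continuous_on UNIV F" "F p = 1" "\<And>x. 0 \<le> F x"
      "\<And>x. x \<noteq> p \<Longrightarrow> F x < 1"
      using peak_exists[OF normal_K[OF assms(1)] gp] by blast
    have Fb: "\<bar>F x\<bar> \<le> 1" for x
      using F(2) F(3)[of x] F(4)[of x] by (cases "x = p") (auto simp: less_imp_le)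
    define f where "f = Bcontfun F"
    have fa: "apply_bcontfun f = F" unfolding f_def by (rule mk_bcontfun[OF F(1) Fb])
    have nf: "norm f = 1"
    proof (rule antisym)
      show "norm f \<le> 1" by (rule norm_bound) (use Fb fa in simp)
      show "1 \<le> norm f" using norm_bounded[of f p] fa F(2) by simp
    qed
    define T where "T x = c x *\<^sub>R f" for x
    have lT: "linear T"
    proof (rule linearI)
      show "T (x + y) = T x + T y" for x y
        by (simp add: T_def linear_add[OF lc] scaleR_add_left)
      show "T (r *\<^sub>R x) = r *\<^sub>R T x" for r x
        by (simp add: T_def linear_cmul[OF lc])
    qed
    have iT: "norm (T x) = norm x" for x using nx[of x] nf by (simp add: T_def)
    have Te: "T e = f" by (simp add: T_def ce)
    have "U_embedding T"
      unfolding U_embedding_def linear_isometry_def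
    proof (intro conjI allI lT iT)
      fix xs :: "'b \<Rightarrow>\<^sub>L real"
      define a where "a = blinfun_apply xs e"
      show "\<exists>!ys :: ('k \<Rightarrow>\<^sub>C real) \<Rightarrow>\<^sub>L real.
          (\<forall>x. blinfun_apply ys (T x) = blinfun_apply xs x) \<and> norm ys = norm xs"
      proof (rule ex1I[of _ "a *\<^sub>R delta p"])
        show "(\<forall>x. blinfun_apply (a *\<^sub>R delta p) (T x) = blinfun_apply xs x) \<and> norm (a *\<^sub>R delta p) = norm xs"
        proof (intro conjI allI)
          fix x
          show "blinfun_apply (a *\<^sub>R delta p) (T x) = blinfun_apply xs x"
            using xsc[of xs x] fa F(2) by (simp add: T_def a_def)
          show "norm (a *\<^sub>R delta p) = norm xs" using xsn[of xs] by (simp add: a_def)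
        qed
      next
        fix ys :: "('k \<Rightarrow>\<^sub>C real) \<Rightarrow>\<^sub>L real"
        assume ys: "(\<forall>x. blinfun_apply ys (T x) = blinfun_apply xs x) \<and> norm ys = norm xs"
        show "ys = a *\<^sub>R delta p"
        proof (cases "a = 0")
          case True
          then have "norm ys = 0" using ys xsn[of xs] by (simp add: a_def)
          then show ?thesis using True by simp
        next
          case False
          define \<phi> where "\<phi> = (1 / a) *\<^sub>R ys"
          have nys: "norm ys = \<bar>a\<bar>" using ys xsn[of xs] by (simp add: a_def)
          have "norm \<phi> = 1" using nys False by (simp add: \<phi>_def)
          then have nphi: "norm \<phi> \<le> 1" by simp
          have "blinfun_apply ys f = a" using ys Te by (metis a_def)
          then have phif: "blinfun_apply \<phi> f = 1" using False by (simp add: \<phi>_def)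
          have fp: "apply_bcontfun f p = 1" using fa F(2) by simp
          have lt: "\<bar>apply_bcontfun f x\<bar> < 1" if "x \<noteq> p" for x
            using fa F(3)[of x] F(4)[OF that] by simp
          have "blinfun_apply \<phi> g = apply_bcontfun g p" for g
            by (rule peak_unique[OF assms(1) fp lt nphi phif])
          then have "blinfun_apply ys g = a * apply_bcontfun g p" for g
            using False by (simp add: \<phi>_def) (metis divide_eq_eq mult.commute)
          then show ?thesis by (intro blinfun_eqI) simp
        qed
      qed
    qed
    then show "\<exists>T :: 'b \<Rightarrow> ('k \<Rightarrow>\<^sub>C real). U_embedding T" by blast
  qed
qed

end
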